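(* Let $U$ be a connected graph containing exactly one cycle, where the cycle has an even number of vertices, exactly one vertex of the cycle has degree $3$ in $U$, and all other vertices of the cycle have degree $2$ in $U$. Let $\Delta$ be the distance squared matrix of $U$. If $U$ has at least one vertex of degree $2$ that is not on the cycle, then $i_0(\Delta)\ge 1$.
   Context: For a connected graph with vertices $1,\dots,n$, the distance squared matrix is the matrix with $(i,j)$ entry $d_{ij}^2$, where $d_{ij}$ is the graph distance between $i$ and $j$. For a real symmetric matrix $M$, $i_0(M)$ denotes the multiplicity of $0$ as an eigenvalue of $M$. *)

theory Defs
  imports "Jordan_Normal_Form.Char_Poly"
begin

definition simple_graph :: "nat \<Rightarrow> (nat \<Rightarrow> nat \<Rightarrow> bool) \<Rightarrow> bool" where
  "simple_graph n E \<longleftrightarrow> (\<forall>u v. E u v \<longrightarrow> u < n \<and> v < n) \<and> (\<forall>u v. E u v \<longrightarrow> E v u) \<and> (\<forall>u. \<not> E u u)"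

fun walk :: "(nat \<Rightarrow> nat \<Rightarrow> bool) \<Rightarrow> nat list \<Rightarrow> bool" where
  "walk E [] = True"
| "walk E [x] = True"
| "walk E (x # y # xs) = (E x y \<and> walk E (y # xs))"

definition walk_of_len :: "(nat \<Rightarrow> nat \<Rightarrow> bool) \<Rightarrow> nat \<Rightarrow> nat \<Rightarrow> nat \<Rightarrow> nat list \<Rightarrow> bool" where
  "walk_of_len E u v k xs \<longleftrightarrow> walk E xs \<and> xs \<noteq> [] \<and> hd xs = u \<and> last xs = v \<and> length xs = Suc k"

definition connected_graph :: "nat \<Rightarrow> (nat \<Rightarrow> nat \<Rightarrow> bool) \<Rightarrow> bool" where
  "connected_graph n E \<longleftrightarrow> (\<forall>u<n. \<forall>v<n. \<exists>k xs. walk_of_len E u v k xs)"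

definition gdist :: "(nat \<Rightarrow> nat \<Rightarrow> bool) \<Rightarrow> nat \<Rightarrow> nat \<Rightarrow> nat" where
  "gdist E u v = (LEAST k. \<exists>xs. walk_of_len E u v k xs)"

definition degree :: "nat \<Rightarrow> (nat \<Rightarrow> nat \<Rightarrow> bool) \<Rightarrow> nat \<Rightarrow> nat" where
  "degree n E v = card {w. w < n \<and> E v w}"

definition is_cycle :: "nat \<Rightarrow> (nat \<Rightarrow> nat \<Rightarrow> bool) \<Rightarrow> nat list \<Rightarrow> bool" where
  "is_cycle n E cs \<longleftrightarrow> length cs \<ge> 3 \<and> distinct cs \<and> set cs \<subseteq> {0..<n} \<and> walk E cs \<and> E (last cs) (hd cs)"

text \<open>The edge set of a cycle; two cycle lists represent the same cycle (subgraph) iff their edge sets agree.\<close>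
definition cycle_edges :: "nat list \<Rightarrow> nat set set" where
  "cycle_edges cs = {{cs ! i, cs ! ((i + 1) mod length cs)} | i. i < length cs}"

definition dist_sq_matrix :: "nat \<Rightarrow> (nat \<Rightarrow> nat \<Rightarrow> bool) \<Rightarrow> real mat" where
  "dist_sq_matrix n E = mat n n (\<lambda>(i, j). (real (gdist E i j))^2)"

text \<open>Multiplicity of 0 as an eigenvalue (algebraic multiplicity; equals geometric for symmetric matrices).\<close>
definition i0 :: "real mat \<Rightarrow> nat" where
  "i0 M = order 0 (char_poly M)"

end

theory Submission
  imports Defs
begin

lemma walk_Cons: "walk E (x # xs) = (walk E xs \<and> (xs \<noteq> [] \<longrightarrow> E x (hd xs)))"
  by (cases xs) auto

lemma walk_append: "walk E (xs @ ys) = (walk E xs \<and> walk E ys \<and> (xs \<noteq> [] \<and> ys \<noteq> [] \<longrightarrow> E (last xs) (hd ys)))"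
  by (induction xs) (auto simp: walk_Cons)

lemma walk_rev: assumes "\<And>x y. E x y \<Longrightarrow> E y x" shows "walk E xs \<Longrightarrow> walk E (rev xs)"
  by (induction xs) (auto simp: walk_Cons walk_append assms hd_rev last_rev)

lemma walk_restrict: "walk E xs \<Longrightarrow> (\<And>x y. x \<in> set xs \<Longrightarrow> y \<in> set xs \<Longrightarrow> E x y \<Longrightarrow> E' x y) \<Longrightarrow> walk E' xs"
  by (induction xs) (auto simp: walk_Cons)

lemma walk_nth: "walk E xs \<Longrightarrow> Suc i < length xs \<Longrightarrow> E (xs!i) (xs!Suc i)"
proof (induction xs arbitrary: i)
  case (Cons x xs) thus ?case by (cases i) (auto simp: walk_Cons hd_conv_nth)
qed simp

lemma walk_take: "walk E xs \<Longrightarrow> walk E (take m xs)"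
  using walk_append[of E "take m xs" "drop m xs"] by simp

lemma walk_drop: "walk E xs \<Longrightarrow> walk E (drop m xs)"
  using walk_append[of E "take m xs" "drop m xs"] by simp

lemma walk_vertices: assumes "simple_graph n E" "walk E xs" "length xs \<ge> 2" "z \<in> set xs" shows "z < n"
proof -
  obtain i where i: "i < length xs" "z = xs!i" using assms(4) by (auto simp: in_set_conv_nth)
  show ?thesis
  proof (cases "Suc i < length xs")
    case True thus ?thesis using walk_nth[OF assms(2) True] assms(1) i unfolding simple_graph_def by blast
  next
    case False
    hence "i > 0" "Suc (i - 1) < length xs" using i assms(3) by auto
    thus ?thesis using walk_nth[OF assms(2), of "i-1"] assms(1) i unfolding simple_graph_def by auto
  qed
qed

lemma walk_incident: assumes "walk E xs" "length xs \<ge> 2" "z \<in> set xs" shows "\<exists>y. E z y \<or> E y z"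
proof -
  obtain i where i: "i < length xs" "z = xs!i" using assms(3) by (auto simp: in_set_conv_nth)
  show ?thesis
  proof (cases "Suc i < length xs")
    case True thus ?thesis using walk_nth[OF assms(1) True] i by blast
  next
    case False
    hence "i > 0" "Suc (i - 1) < length xs" using i assms(2) by auto
    thus ?thesis using walk_nth[OF assms(1), of "i-1"] i by auto
  qed
qed

lemma gdist_le: "walk_of_len E u v k xs \<Longrightarrow> gdist E u v \<le> k"
  unfolding gdist_def by (rule Least_le) blast

lemma gdist_ex: "walk_of_len E u v k xs \<Longrightarrow> \<exists>ys. walk_of_len E u v (gdist E u v) ys"
  unfolding gdist_def by (rule LeastI_ex) blast

lemma gdist_ex_conn: "connected_graph n E \<Longrightarrow> u < n \<Longrightarrow> v < n \<Longrightarrow> \<exists>ys. walk_of_len E u v (gdist E u v) ys"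
  unfolding connected_graph_def using gdist_ex by blast

lemma gdist_refl[simp]: "gdist E u u = 0"
proof -
  have "walk_of_len E u u 0 [u]" unfolding walk_of_len_def by simp
  thus ?thesis using gdist_le by fastforce
qed

lemma gdist_edge: "E u v \<Longrightarrow> gdist E u v \<le> 1"
  by (rule gdist_le[of E u v 1 "[u,v]"]) (simp add: walk_of_len_def)

lemma gdist_zero: assumes "walk_of_len E u v (gdist E u v) xs" "gdist E u v = 0" shows "u = v"
  using assms unfolding walk_of_len_def by (cases xs) auto

lemma gdist_sym: assumes "simple_graph n E" "connected_graph n E" "u < n" "v < n"
  shows "gdist E u v = gdist E v u"
proof -
  have sy: "\<And>x y. E x y \<Longrightarrow> E y x" using assms(1) unfolding simple_graph_def by blast
  have *: "gdist E b a \<le> gdist E a b" if ab: "a < n" "b < n" for a b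
  proof -
    obtain xs where "walk_of_len E a b (gdist E a b) xs" using gdist_ex_conn[OF assms(2) ab] by blast
    hence "walk_of_len E b a (gdist E a b) (rev xs)" unfolding walk_of_len_def
      using walk_rev[OF sy] by (auto simp: hd_rev last_rev)
    thus ?thesis by (rule gdist_le)
  qed
  show ?thesis using *[of u v] *[of v u] assms by simp
qed

lemma walk_of_len_concat: assumes "walk_of_len E u v a xs" "walk_of_len E v w b ys"
  shows "walk_of_len E u w (a + b) (xs @ tl ys)"
proof -
  have ys: "ys = v # tl ys" using assms(2) unfolding walk_of_len_def by (cases ys) auto
  have "walk E (tl ys)" using assms(2) walk_drop[of E ys 1] unfolding walk_of_len_def by (simp add: drop_Suc)
  moreover have "tl ys \<noteq> [] \<Longrightarrow> E v (hd (tl ys))" using assms(2) ys walk_Cons[of E v "tl ys"]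
    unfolding walk_of_len_def by auto
  moreover have "last (xs @ tl ys) = w" using assms ys unfolding walk_of_len_def
  proof (cases "tl ys = []")
    case True thus ?thesis using assms ys unfolding walk_of_len_def by (metis append_Nil2 last_ConsL)
  next
    case False thus ?thesis using assms ys unfolding walk_of_len_def by (metis last_appendR last_ConsR)
  qed
  ultimately show ?thesis using assms ys unfolding walk_of_len_def by (auto simp: walk_append)
qed

lemma gdist_triangle: assumes "connected_graph n E" "u < n" "v < n" "w < n"
  shows "gdist E u w \<le> gdist E u v + gdist E v w"
proof -
  obtain xs where "walk_of_len E u v (gdist E u v) xs" using gdist_ex_conn[OF assms(1)] assms by blast
  moreover obtain ys where "walk_of_len E v w (gdist E v w) ys" using gdist_ex_conn[OF assms(1)] assms by blast
  ultimately show ?thesis using walk_of_len_concat gdist_le by blast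
qed

lemma gdist_pred: assumes "connected_graph n E" "simple_graph n E" "u < n" "v < n" "gdist E u v > 0"
  shows "\<exists>y. y < n \<and> E y v \<and> gdist E u y + 1 = gdist E u v"
proof -
  obtain xs where xs: "walk_of_len E u v (gdist E u v) xs" using gdist_ex_conn[OF assms(1)] assms by blast
  define d where "d = gdist E u v"
  have len: "length xs = Suc d" using xs unfolding walk_of_len_def d_def by simp
  have d0: "d > 0" using assms(5) d_def by simp
  define y where "y = xs ! (d - 1)"
  have sd: "Suc (d - 1) = d" using d0 by simp
  have lastx: "last xs = xs ! d" using len last_conv_nth[of xs] by (metis diff_Suc_1 list.size(3) nat.distinct(1))
  have "E (xs!(d-1)) (xs!d)" using walk_nth[of E xs "d-1"] xs len d0 unfolding walk_of_len_def by (simp add: sd)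
  hence e: "E y v" using lastx xs unfolding y_def walk_of_len_def d_def by simp
  have tk: "take d xs \<noteq> []" "hd (take d xs) = u" "last (take d xs) = y" "length (take d xs) = Suc (d - 1)"
    using xs len d0 unfolding walk_of_len_def y_def d_def
    by (auto simp: hd_conv_nth last_conv_nth)
  have "walk_of_len E u y (d - 1) (take d xs)" using xs tk unfolding walk_of_len_def by (auto simp: walk_take)
  hence "gdist E u y \<le> d - 1" by (rule gdist_le)
  moreover have "y < n" using e assms(2) unfolding simple_graph_def by blast
  moreover have "d \<le> gdist E u y + 1" using gdist_triangle[OF assms(1) assms(3) \<open>y < n\<close> assms(4)] gdist_edge[of E y v, OF e]
    unfolding d_def by linarith
  ultimately show ?thesis using e d_def d0 by auto
qed

lemma gdist_prefix: assumes "walk_of_len E x y k xs" "z \<in> set xs" "z \<noteq> y"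
  shows "gdist E x z < k"
proof -
  obtain i where i: "i < length xs" "xs ! i = z" using assms(2) by (auto simp: in_set_conv_nth)
  have len: "length xs = Suc k" using assms(1) unfolding walk_of_len_def by simp
  have "i \<noteq> k" using assms(1,3) i len unfolding walk_of_len_def by (auto simp: last_conv_nth)
  hence ik: "i < k" using i len by simp
  have "walk_of_len E x z i (take (Suc i) xs)" using assms(1) i ik len unfolding walk_of_len_def
    by (auto simp: walk_take hd_conv_nth last_conv_nth min_def)
  hence "gdist E x z \<le> i" by (rule gdist_le)
  thus ?thesis using ik by simp
qed

lemma gdist_distinct: assumes "walk_of_len E u v (gdist E u v) xs" shows "distinct xs"
proof (rule ccontr)
  assume "\<not> distinct xs"
  then obtain i j where ij: "i < j" "j < length xs" "xs ! i = xs ! j"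
    by (metis distinct_conv_nth linorder_neqE_nat)
  define ys where "ys = take (Suc i) xs @ drop (Suc j) xs"
  have w: "walk E xs" "xs \<noteq> []" "hd xs = u" "last xs = v" "length xs = Suc (gdist E u v)"
    using assms unfolding walk_of_len_def by auto
  have lt: "last (take (Suc i) xs) = xs ! i" using ij by (subst last_conv_nth) (auto simp: min_def)
  have "drop (Suc j) xs \<noteq> [] \<Longrightarrow> E (last (take (Suc i) xs)) (hd (drop (Suc j) xs))"
    using walk_nth[OF w(1), of j] ij lt by (simp add: hd_drop_conv_nth)
  hence wy: "walk E ys" unfolding ys_def using w(1) by (simp add: walk_append walk_take walk_drop)
  have hy: "hd ys = u" "ys \<noteq> []" unfolding ys_def using w ij by (cases xs; auto)+
  have ly: "last ys = v"
  proof (cases "Suc j < length xs")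
    case True thus ?thesis unfolding ys_def using w by (simp add: last_drop)
  next
    case False hence "j = length xs - 1" using ij by simp
    hence "xs ! j = last xs" using w by (simp add: last_conv_nth)
    thus ?thesis unfolding ys_def using w ij lt False by simp
  qed
  have "length ys = Suc (length xs - Suc j + i)" unfolding ys_def using ij by simp
  hence "walk_of_len E u v (length xs - Suc j + i) ys" using wy hy ly unfolding walk_of_len_def by simp
  hence "gdist E u v \<le> length xs - Suc j + i" by (rule gdist_le)
  thus False using ij w(5) by simp
qed

lemma card2_eq: "finite S \<Longrightarrow> card S = 2 \<Longrightarrow> a \<in> S \<Longrightarrow> b \<in> S \<Longrightarrow> a \<noteq> b \<Longrightarrow> S = {a, b}"
proof -
  assume a: "finite S" "card S = 2" "a \<in> S" "b \<in> S" "a \<noteq> b"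
  have "{a, b} \<subseteq> S" "card {a, b} = card S" using a by auto
  thus ?thesis using card_subset_eq[OF a(1)] by metis
qed

lemma card3_ex: assumes "finite S" "card S = 3" "a \<in> S" "b \<in> S" "a \<noteq> b"
  shows "\<exists>t. S = {a, b, t} \<and> t \<noteq> a \<and> t \<noteq> b"
proof -
  have "card (S - {a, b}) = 1" using assms by (simp add: card_Diff_subset)
  then obtain t where t: "S - {a, b} = {t}" by (rule card_1_singletonE)
  hence "S = {a, b, t}" using assms(3,4) by blast
  thus ?thesis using t by blast
qed

locale ugraph =
  fixes n :: nat and E :: "nat \<Rightarrow> nat \<Rightarrow> bool" and cs :: "nat list" and v :: nat and j0 :: nat
  assumes sg: "simple_graph n E"
    and conn: "connected_graph n E"
    and cyc: "is_cycle n E cs"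
    and uniq: "\<forall>cs'. is_cycle n E cs' \<longrightarrow> cycle_edges cs' = cycle_edges cs"
    and ev: "even (length cs)"
    and j0: "j0 < length cs" "cs ! j0 = v"
    and degv: "degree n E v = 3"
    and deg2: "\<And>y. y \<in> set cs \<Longrightarrow> y \<noteq> v \<Longrightarrow> degree n E y = 2"
begin

abbreviation "L \<equiv> length cs"
abbreviation "C \<equiv> set cs"
definition "N x = {w. w < n \<and> E x w}"
definition "c m = cs ! ((j0 + m) mod L)"
abbreviation "d \<equiv> gdist E"

lemma L3: "L \<ge> 3" using cyc unfolding is_cycle_def by simp
lemma L0: "L > 0" using L3 by linarith

lemma sym: "E x y \<Longrightarrow> E y x" using sg unfolding simple_graph_def by blast
lemma irr: "\<not> E x x" using sg unfolding simple_graph_def by blast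
lemma bnd: "E x y \<Longrightarrow> x < n \<and> y < n" using sg unfolding simple_graph_def by blast
lemma finN: "finite (N x)" unfolding N_def by simp
lemma degN: "degree n E x = card (N x)" unfolding degree_def N_def by simp
lemma inN: "y \<in> N x \<longleftrightarrow> E x y" unfolding N_def using bnd by blast

lemma cs_edge: "i < L \<Longrightarrow> E (cs ! i) (cs ! ((i + 1) mod L))"
proof -
  assume i: "i < L"
  show ?thesis
  proof (cases "i + 1 < L")
    case True thus ?thesis using walk_nth[of E cs i] cyc unfolding is_cycle_def by simp
  next
    case False hence "i = L - 1" using i by simp
    thus ?thesis using cyc L0 unfolding is_cycle_def by (simp add: last_conv_nth hd_conv_nth)
  qed
qed

lemma c_edge: "E (c m) (c (Suc m))"
proof -
  have "((j0 + m) mod L + 1) mod L = (j0 + Suc m) mod L" by (simp add: mod_Suc_eq)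
  thus ?thesis using cs_edge[of "(j0 + m) mod L"] L0 unfolding c_def by simp
qed

lemma c_eq: "c x = c y \<longleftrightarrow> x mod L = y mod L"
proof -
  have "c x = c y \<longleftrightarrow> (j0 + x) mod L = (j0 + y) mod L"
    unfolding c_def using cyc L0 unfolding is_cycle_def by (simp add: nth_eq_iff_index_eq)
  also have "\<dots> \<longleftrightarrow> x mod L = y mod L" by (simp add: nat_mod_eq_iff)
  finally show ?thesis .
qed

lemma c_in: "c m \<in> C" unfolding c_def using L0 by simp

lemma c_surj: "y \<in> C \<Longrightarrow> \<exists>m < L. y = c m"
proof -
  assume "y \<in> C"
  then obtain i where i: "i < L" "y = cs ! i" by (auto simp: in_set_conv_nth)
  define m where "m = (i + L - j0) mod L"
  have "(j0 + m) mod L = (j0 + (i + L - j0)) mod L" unfolding m_def by (simp add: mod_add_right_eq)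
  also have "\<dots> = i" using j0 i by simp
  finally have "y = c m" unfolding c_def using i by simp
  moreover have "m < L" unfolding m_def using L0 by simp
  ultimately show ?thesis by blast
qed

lemma c0: "c 0 = v" unfolding c_def using j0 by simp

lemma C_bnd: "y \<in> C \<Longrightarrow> y < n" using cyc unfolding is_cycle_def by auto
lemma c_bnd: "c m < n" using C_bnd c_in by blast
lemma v_in: "v \<in> C" using j0 nth_mem by metis
lemma v_bnd: "v < n" using C_bnd v_in by blast

lemma d_zero: "x < n \<Longrightarrow> y < n \<Longrightarrow> d x y = 0 \<Longrightarrow> x = y"
  using gdist_ex_conn[OF conn] gdist_zero by metis

lemma d_sym: "x < n \<Longrightarrow> y < n \<Longrightarrow> d x y = d y x" using gdist_sym[OF sg conn] by blast
lemma d_tri: "x < n \<Longrightarrow> y < n \<Longrightarrow> z < n \<Longrightarrow> d x z \<le> d x y + d y z" using gdist_triangle[OF conn] by blast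
lemma d_edge: "E x y \<Longrightarrow> d x y = 1"
proof -
  assume e: "E x y"
  have "x \<noteq> y" using e irr by blast
  hence "d x y \<noteq> 0" using d_zero bnd[OF e] by blast
  thus ?thesis using gdist_edge[of E x y, OF e] by linarith
qed

lemma Nc: assumes "0 < m" "m < L" shows "N (c m) = {c (Suc m), c (m - 1)}"
proof -
  have "c m \<noteq> v" using c_eq[of m 0] c0 assms by simp
  hence dg: "card (N (c m)) = 2" using deg2[OF c_in] degN by simp
  have i1: "c (Suc m) \<in> N (c m)" using c_edge inN by blast
  have "E (c (m - 1)) (c m)" using c_edge[of "m - 1"] assms by simp
  hence i2: "c (m - 1) \<in> N (c m)" using sym inN by blast
  have "Suc m mod L \<noteq> (m - 1) mod L"
  proof (cases "Suc m < L")
    case True thus ?thesis using assms by simp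
  next
    case False hence "Suc m = L" using assms by simp
    thus ?thesis using assms L3 by simp
  qed
  hence "c (Suc m) \<noteq> c (m - 1)" using c_eq by blast
  thus ?thesis using card2_eq[OF finN dg i1 i2] by blast
qed

lemma cL: "c L = v" using c_eq[of L 0] c0 by simp

lemma Nv_ex: "\<exists>t. N v = {c 1, c (L - 1), t} \<and> t \<noteq> c 1 \<and> t \<noteq> c (L - 1)"
proof -
  have i1: "c 1 \<in> N v" using c_edge[of 0] c0 inN by simp
  have "E (c (L - 1)) (c L)" using c_edge[of "L - 1"] L0 by simp
  hence i2: "c (L - 1) \<in> N v" using cL sym inN by simp
  have "c 1 \<noteq> c (L - 1)" using c_eq[of 1 "L - 1"] L3 by simp
  thus ?thesis using card3_ex[OF finN _ i1 i2] degv degN by simp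
qed

definition "t = (SOME t. N v = {c 1, c (L - 1), t} \<and> t \<noteq> c 1 \<and> t \<noteq> c (L - 1))"
lemma t_prop: "N v = {c 1, c (L - 1), t}" "t \<noteq> c 1" "t \<noteq> c (L - 1)"
  using someI_ex[OF Nv_ex] unfolding t_def by blast+

lemma Ev_t: "E v t" using t_prop inN by blast
lemma t_bnd: "t < n" using Ev_t bnd by blast
lemma t_ne_v: "t \<noteq> v" using Ev_t irr by metis

lemma t_notC: "t \<notin> C"
proof
  assume "t \<in> C"
  then obtain m where m: "m < L" "t = c m" using c_surj by blast
  have "m \<noteq> 0" using m t_ne_v c0 by metis
  hence Nt: "N t = {c (Suc m), c (m - 1)}" using Nc m by simp
  have "v \<in> N t" using Ev_t sym inN by blast
  hence "c 0 = c (Suc m) \<or> c 0 = c (m - 1)" using Nt c0 by simp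
  hence "0 = Suc m mod L \<or> 0 = (m - 1) mod L" using c_eq by simp
  moreover have "(m - 1) mod L = m - 1" using m by simp
  moreover have "Suc m mod L = 0 \<Longrightarrow> Suc m = L" using m by (metis Suc_leI le_neq_implies_less mod_less not_less_zero nat.distinct(1) zero_less_Suc) 
  ultimately have "m = L - 1 \<or> m = 1" using \<open>m \<noteq> 0\<close> by auto
  thus False using m t_prop by blast
qed

lemma closure: assumes "y \<in> C" "y \<noteq> v" "E y z" shows "z \<in> C"
proof -
  obtain m where m: "m < L" "y = c m" using c_surj assms(1) by blast
  have "m \<noteq> 0" using m assms(2) c0 by metis
  hence "N y = {c (Suc m), c (m - 1)}" using Nc m by simp
  thus ?thesis using assms(3) inN[of z y] c_in by auto
qed

lemma sep: assumes x: "x < n" "x \<notin> C" shows "y \<in> C \<Longrightarrow> d x v + d v y \<le> d x y"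
proof (induction "d x y" arbitrary: y rule: less_induct)
  case less
  show ?case
  proof (cases "y = v")
    case True thus ?thesis by simp
  next
    case False
    have yn: "y < n" using less.prems C_bnd by blast
    have "x \<noteq> y" using x less.prems by blast
    hence "d x y > 0" using d_zero x yn by blast
    then obtain y' where y': "y' < n" "E y' y" "d x y' + 1 = d x y" using gdist_pred[OF conn sg x(1) yn] by blast
    have "y' \<in> C" using closure[OF less.prems False sym[OF y'(2)]] .
    hence ih: "d x v + d v y' \<le> d x y'" using less.hyps y' by simp
    have "d v y \<le> d v y' + d y' y" using d_tri v_bnd y' yn by blast
    thus ?thesis using ih y' d_edge[OF y'(2)] by simp
  qed
qed

lemma nonC_v: assumes x: "x < n" "x \<notin> C" shows "d x v = d x t + 1"
proof -
  have "x \<noteq> v" using x v_in by blast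
  hence "d x v > 0" using d_zero x v_bnd by blast
  then obtain y where y: "y < n" "E y v" "d x y + 1 = d x v" using gdist_pred[OF conn sg x(1) v_bnd] by blast
  have "y \<notin> C"
  proof
    assume "y \<in> C" thus False using sep[OF x] y by fastforce
  qed
  moreover have "y \<in> N v" using y sym inN by blast
  ultimately have "y = t" using t_prop c_in by auto
  thus ?thesis using y by simp
qed

definition "k = L div 2"
definition "rho m = min m (L - m)"
definition "ant = c k"

lemma Lk: "L = 2 * k" using ev unfolding k_def by simp
lemma k1: "k \<ge> 1" using Lk L3 by simp

lemma c_walk: "d (c i) (c (i + m)) \<le> m"
proof (induction m)
  case (Suc m)
  have "d (c i) (c (i + Suc m)) \<le> d (c i) (c (i + m)) + d (c (i + m)) (c (Suc (i + m)))"
    using d_tri c_bnd by simp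
  thus ?case using Suc d_edge[OF c_edge[of "i + m"]] by simp
qed simp

lemma dvc_upper: assumes "m < L" shows "d v (c m) \<le> rho m"
proof -
  have "d v (c m) \<le> m" using c_walk[of 0 m] c0 by simp
  moreover have "d (c m) (c (m + (L - m))) \<le> L - m" by (rule c_walk)
  hence "d (c m) v \<le> L - m" using assms cL by simp
  hence "d v (c m) \<le> L - m" using d_sym c_bnd v_bnd by simp
  ultimately show ?thesis unfolding rho_def by simp
qed

lemma rho_step1: "m < L \<Longrightarrow> rho m \<le> rho (Suc m mod L) + 1"
  unfolding rho_def by (cases "Suc m < L") auto

lemma rho_step2: "0 < m \<Longrightarrow> m < L \<Longrightarrow> rho m \<le> rho (m - 1) + 1"
  unfolding rho_def by auto

lemma dvc_lower: "m < L \<Longrightarrow> rho m \<le> d v (c m)"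
proof (induction "d v (c m)" arbitrary: m rule: less_induct)
  case less
  show ?case
  proof (cases "m = 0")
    case True thus ?thesis unfolding rho_def by simp
  next
    case False
    have "c m \<noteq> v" using c_eq[of m 0] c0 False less.prems by simp
    hence "d v (c m) > 0" using d_zero[OF v_bnd c_bnd] by (metis neq0_conv)
    then obtain y where y: "y < n" "E y (c m)" "d v y + 1 = d v (c m)" using gdist_pred[OF conn sg v_bnd c_bnd] by blast
    have "y \<in> N (c m)" using y sym inN by blast
    hence "y = c (Suc m) \<or> y = c (m - 1)" using Nc[of m] False less.prems by auto
    thus ?thesis
    proof
      assume yc: "y = c (Suc m)"
      hence yc': "y = c (Suc m mod L)" using c_eq by simp
      have "Suc m mod L < L" using L0 by simp
      hence "rho (Suc m mod L) \<le> d v y" using less.hyps y yc' by simp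
      thus ?thesis using rho_step1[OF less.prems] y by simp
    next
      assume yc: "y = c (m - 1)"
      have "m - 1 < L" using less.prems by simp
      hence "rho (m - 1) \<le> d v y" using less.hyps y yc by simp
      thus ?thesis using rho_step2[of m] False less.prems y by simp
    qed
  qed
qed

lemma dvc: "m < L \<Longrightarrow> d v (c m) = rho m" using dvc_lower dvc_upper by (simp add: le_antisym)

lemma dvant: "d v ant = k"
proof -
  have "k < L" using Lk k1 by simp
  moreover have "rho k = k" unfolding rho_def using Lk by simp
  ultimately show ?thesis unfolding ant_def using dvc by simp
qed

lemma ant_bnd: "ant < n" unfolding ant_def using c_bnd .

lemma dcant: assumes "m < L" shows "d (c m) ant + rho m = k"
proof -
  have up: "d (c m) ant \<le> k - rho m"
  proof (cases "m \<le> k")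
    case True
    have "d (c m) (c (m + (k - m))) \<le> k - m" by (rule c_walk)
    moreover have "rho m = m" unfolding rho_def using True Lk by simp
    ultimately show ?thesis unfolding ant_def using True by simp
  next
    case False
    have "d (c k) (c (k + (m - k))) \<le> m - k" by (rule c_walk)
    moreover have "rho m = L - m" unfolding rho_def using False Lk by simp
    ultimately show ?thesis unfolding ant_def using False Lk d_sym c_bnd assms by simp
  qed
  have "d v ant \<le> d v (c m) + d (c m) ant" using d_tri v_bnd c_bnd ant_bnd by blast
  hence "k \<le> rho m + d (c m) ant" using dvant dvc[OF assms] by simp
  moreover have "rho m \<le> k" unfolding rho_def using Lk by simp
  ultimately show ?thesis using up by linarith
qed

lemma dct: assumes "m < L" shows "d (c m) t = rho m + 1"
proof -
  have "d t v + d v (c m) \<le> d t (c m)" using sep[OF t_bnd t_notC] c_in by blast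
  moreover have "d t v = 1" using d_edge[OF sym[OF Ev_t]] .
  moreover have "d (c m) t \<le> d (c m) v + d v t" using d_tri c_bnd v_bnd t_bnd by blast
  moreover have "d v t = 1" using d_edge[OF Ev_t] .
  moreover have "d (c m) v = d v (c m)" "d (c m) t = d t (c m)" using d_sym c_bnd v_bnd t_bnd by auto
  ultimately show ?thesis using dvc[OF assms] by simp
qed

lemma nonC_ant: assumes x: "x < n" "x \<notin> C" shows "d x ant = d x v + k"
proof -
  have "d x v + d v ant \<le> d x ant" using sep[OF x] c_in unfolding ant_def by blast
  moreover have "d x ant \<le> d x v + d v ant" using d_tri x v_bnd ant_bnd by blast
  ultimately show ?thesis using dvant by simp
qed

lemma no_bypass:
  assumes w: "w < n" "w \<notin> C" "N w = {a, b}" "a \<noteq> b"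
    and P: "walk_of_len (\<lambda>x y. E x y \<and> x \<noteq> w \<and> y \<noteq> w) a b l P"
  shows False
proof -
  define E' where "E' = (\<lambda>x y. E x y \<and> x \<noteq> w \<and> y \<noteq> w)"
  have P': "walk_of_len E' a b l P" using P unfolding E'_def .
  obtain Q where Q: "walk_of_len E' a b (gdist E' a b) Q" using gdist_ex[OF P'] by blast
  have dQ: "distinct Q" using gdist_distinct[OF Q] .
  have wQ: "walk E' Q" "Q \<noteq> []" "hd Q = a" "last Q = b" using Q unfolding walk_of_len_def by auto
  have lQ: "length Q \<ge> 2"
  proof (rule ccontr)
    assume "\<not> length Q \<ge> 2"
    then obtain q where "Q = [q]" using wQ(2) by (cases Q) (auto simp: Suc_le_eq)
    thus False using wQ w(4) by simp
  qed
  have wE: "walk E Q" using walk_restrict[OF wQ(1)] unfolding E'_def by blast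
  have nw: "w \<notin> set Q"
  proof
    assume "w \<in> set Q"
    then obtain y where "E' w y \<or> E' y w" using walk_incident[OF wQ(1) lQ] by blast
    thus False unfolding E'_def by blast
  qed
  have Qn: "set Q \<subseteq> {0..<n}" using walk_vertices[OF sg wE lQ] by auto
  define cs' where "cs' = Q @ [w]"
  have Eab: "E w a" "E w b" using w(3) inN by blast+
  have "is_cycle n E cs'" unfolding is_cycle_def cs'_def
    using lQ dQ nw Qn w(1) wE wQ sym[OF Eab(2)] Eab(1) by (auto simp: walk_append)
  hence ce: "cycle_edges cs' = cycle_edges cs" using uniq by blast
  have "cs' ! length Q = w" "cs' ! ((length Q + 1) mod length cs') = a" unfolding cs'_def
    using wQ by (auto simp: hd_conv_nth nth_append)
  moreover have "length Q < length cs'" unfolding cs'_def by simp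
  ultimately have "{w, a} = {cs' ! length Q, cs' ! ((length Q + 1) mod length cs')} \<and> length Q < length cs'" by simp
  hence "{w, a} \<in> cycle_edges cs'" unfolding cycle_edges_def by blast
  hence "{w, a} \<in> cycle_edges cs" using ce by simp
  then obtain i where "i < L" "{w, a} = {cs ! i, cs ! ((i + 1) mod L)}" unfolding cycle_edges_def by blast
  hence "w \<in> C" using L0 by (metis doubleton_eq_iff mod_less_divisor nth_mem)
  thus False using w(2) by blast
qed

lemma w_dist:
  assumes w: "w < n" "w \<notin> C" "N w = {a, b}" "a \<noteq> b"
    and x: "x < n" "x \<noteq> w" "d x a + 1 = d x w"
  shows "d x b = d x w + 1"
proof (rule ccontr)
  assume ne: "d x b \<noteq> d x w + 1"
  have ab: "E w a" "E w b" using w(3) inN by blast+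
  have abn: "a < n" "b < n" using bnd ab by blast+
  have "d x b \<le> d x w + d w b" using d_tri x(1) w(1) abn by blast
  hence le: "d x b \<le> d x w" using ne d_edge[OF ab(2)] by simp
  obtain xa where xa: "walk_of_len E x a (d x a) xa" using gdist_ex_conn[OF conn x(1) abn(1)] by blast
  obtain xb where xb: "walk_of_len E x b (d x b) xb" using gdist_ex_conn[OF conn x(1) abn(2)] by blast
  have wa: "w \<noteq> a" "w \<noteq> b" using ab irr by metis+
  have n1: "w \<notin> set xa" using gdist_prefix[OF xa _ wa(1)] x(3) by fastforce
  have n2: "w \<notin> set xb" using gdist_prefix[OF xb _ wa(2)] le by fastforce
  have ra: "walk_of_len E a x (d x a) (rev xa)" using xa walk_rev[of E, OF sym] unfolding walk_of_len_def
    by (auto simp: hd_rev last_rev)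
  have P: "walk_of_len E a b (d x a + d x b) (rev xa @ tl xb)" by (rule walk_of_len_concat[OF ra xb])
  have "set (tl xb) \<subseteq> set xb" by (cases xb) auto
  hence "set (rev xa @ tl xb) \<subseteq> set xa \<union> set xb" by auto
  hence "\<forall>z \<in> set (rev xa @ tl xb). z \<noteq> w" using n1 n2 by blast
  hence "walk_of_len (\<lambda>x y. E x y \<and> x \<noteq> w \<and> y \<noteq> w) a b (d x a + d x b) (rev xa @ tl xb)"
    using P walk_restrict[of E "rev xa @ tl xb" "\<lambda>x y. E x y \<and> x \<noteq> w \<and> y \<noteq> w"]
    unfolding walk_of_len_def by blast
  thus False using no_bypass[OF w] by blast
qed

lemma w_identity:
  assumes w: "w < n" "w \<notin> C" "N w = {a, b}" "a \<noteq> b" and x: "x < n"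
  shows "(real (d x a))^2 - 2 * (real (d x w))^2 + (real (d x b))^2 = 2"
proof (cases "x = w")
  case True
  have ab: "E w a" "E w b" using w(3) inN by blast+
  thus ?thesis using True d_edge by simp
next
  case False
  hence "d x w > 0" using d_zero x w(1) by (metis neq0_conv)
  then obtain y where y: "y < n" "E y w" "d x y + 1 = d x w" using gdist_pred[OF conn sg x w(1)] by blast
  have "y \<in> N w" using y sym inN by blast
  hence "y = a \<or> y = b" using w(3) by blast
  hence "(d x a + 1 = d x w \<and> d x b = d x w + 1) \<or> (d x b + 1 = d x w \<and> d x a = d x w + 1)"
  proof
    assume "y = a" thus ?thesis using w_dist[OF w x False] y by simp
  next
    assume "y = b"
    moreover have "N w = {b, a}" "b \<noteq> a" using w by auto
    ultimately show ?thesis using w_dist[OF w(1,2) _ _ x False, of b a] y by simp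
  qed
  thus ?thesis
  proof
    assume h: "d x a + 1 = d x w \<and> d x b = d x w + 1"
    hence e: "real (d x a) = real (d x w) - 1" "real (d x b) = real (d x w) + 1" by linarith+
    show ?thesis unfolding e by (simp add: power2_eq_square algebra_simps)
  next
    assume h: "d x b + 1 = d x w \<and> d x a = d x w + 1"
    hence e: "real (d x b) = real (d x w) - 1" "real (d x a) = real (d x w) + 1" by linarith+
    show ?thesis unfolding e by (simp add: power2_eq_square algebra_simps)
  qed
qed

lemma z_identity: assumes x: "x < n"
  shows "- (real k + 1) * (real (d x v))^2 + (real (d x ant))^2 + real k * (real (d x t))^2 = real k * (real k + 1)"
proof (cases "x \<in> C")
  case True
  then obtain m where m: "m < L" "x = c m" using c_surj by blast
  have rk: "rho m \<le> k" unfolding rho_def using Lk by simp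
  have e1: "real (d x v) = real (rho m)" using dvc[OF m(1)] d_sym c_bnd v_bnd m(2) by metis
  have e2: "real (d x ant) = real k - real (rho m)" using dcant[OF m(1)] m(2) rk by simp
  have e3: "real (d x t) = real (rho m) + 1" using dct[OF m(1)] m(2) by simp
  show ?thesis unfolding e1 e2 e3 by (simp add: power2_eq_square algebra_simps)
next
  case False
  have e1: "real (d x v) = real (d x t) + 1" using nonC_v[OF x False] by simp
  have e2: "real (d x ant) = real (d x t) + 1 + real k" using nonC_ant[OF x False] nonC_v[OF x False] by simp
  show ?thesis unfolding e1 e2 by (simp add: power2_eq_square algebra_simps)
qed

lemma ant_ne_v: "ant \<noteq> v" unfolding ant_def using c_eq[of k 0] c0 Lk k1 by simp

lemma nbr_C: assumes "w \<notin> C" "E w a" "a \<in> C" shows "a = v"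
  using closure[OF assms(3) _ sym[OF assms(2)]] assms(1) by blast

end

lemma delta_sum: "p < (n::nat) \<Longrightarrow> (\<Sum>j = 0..<n. g j * (if j = p then 1 else 0)) = (g p :: real)"
proof -
  assume p: "p < n"
  have "(\<Sum>j = 0..<n. g j * (if j = p then 1 else 0)) = (\<Sum>j = 0..<n. if j = p then g p else 0)"
    by (rule sum.cong) auto
  also have "\<dots> = g p" using p by (simp add: sum.delta sum.delta')
  finally show ?thesis .
qed

lemma lin_expand: "(\<Sum>j=0..<(n::nat). (g j::real) * (2 * (-(K + 1) * dv j + da j + K * dt j) - K * (K + 1) * (pa j - 2 * pw j + pb j)))
  = 2 * (-(K+1) * (\<Sum>j=0..<n. g j * dv j) + (\<Sum>j=0..<n. g j * da j) + K * (\<Sum>j=0..<n. g j * dt j))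
    - K * (K+1) * ((\<Sum>j=0..<n. g j * pa j) - 2 * (\<Sum>j=0..<n. g j * pw j) + (\<Sum>j=0..<n. g j * pb j))"
  by (simp add: algebra_simps sum.distrib sum_subtractf sum_distrib_left sum_negf)

lemma kernel_i0:
  fixes M :: "real mat"
  assumes M: "M \<in> carrier_mat n n" and y: "y \<in> carrier_vec n" "y \<noteq> 0\<^sub>v n" and My: "M *\<^sub>v y = 0\<^sub>v n"
  shows "i0 M \<ge> 1"
proof -
  have "eigenvector M y 0" unfolding eigenvector_def using M y My by auto
  hence "eigenvalue M 0" unfolding eigenvalue_def by auto
  hence r: "poly (char_poly M) 0 = 0" using eigenvalue_root_char_poly[OF M] by auto
  have "char_poly M \<noteq> 0" using degree_monic_char_poly[OF M] by auto
  thus ?thesis using r order_root unfolding i0_def by (metis less_one not_le)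
qed

theorem lemma6p4:
  fixes n :: nat and E :: "nat \<Rightarrow> nat \<Rightarrow> bool" and cs :: "nat list"
  assumes "simple_graph n E"
    and "connected_graph n E"
    and "is_cycle n E cs"
    and "\<forall>cs'. is_cycle n E cs' \<longrightarrow> cycle_edges cs' = cycle_edges cs"
    and "even (length cs)"
    and "card {v \<in> set cs. degree n E v = 3} = 1"
    and "\<forall>v \<in> set cs. degree n E v = 2 \<or> degree n E v = 3"
    and "\<exists>v<n. v \<notin> set cs \<and> degree n E v = 2"
  shows "i0 (dist_sq_matrix n E) \<ge> 1"
proof -
  obtain v where v: "{v \<in> set cs. degree n E v = 3} = {v}" using assms(6) card_1_singletonE by blast
  hence vC: "v \<in> set cs" "degree n E v = 3" by auto
  have dg2: "\<And>y. y \<in> set cs \<Longrightarrow> y \<noteq> v \<Longrightarrow> degree n E y = 2" using v assms(7) by blast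
  obtain j0 where j0: "j0 < length cs" "cs ! j0 = v" using vC(1) by (auto simp: in_set_conv_nth)
  have "ugraph n E cs v j0" unfolding ugraph_def using assms(1-5) j0 vC(2) dg2 by blast
  then interpret U: ugraph n E cs v j0 .
  obtain w where w: "w < n" "w \<notin> set cs" "degree n E w = 2" using assms(8) by blast
  have "card (U.N w) = 2" using w(3) U.degN by simp
  then obtain a b where ab: "U.N w = {a, b}" "a \<noteq> b" unfolding card_2_iff by blast
  have Ea: "E w a" "E w b" using ab U.inN by blast+
  have abn: "a < n" "b < n" using Ea U.bnd by blast+
  define K where "K = real U.k"
  define dl where "dl p j = (if j = p then 1 else 0 :: real)" for p j :: nat
  define f where "f j = 2 * (-(K + 1) * dl v j + dl U.ant j + K * dl U.t j) - K * (K + 1) * (dl a j - 2 * dl w j + dl b j)" for j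
  define M where "M = dist_sq_matrix n E"
  define y where "y = vec n f"
  have M: "M \<in> carrier_mat n n" unfolding M_def dist_sq_matrix_def by simp
  have y: "y \<in> carrier_vec n" unfolding y_def by simp
  have ant_ne: "U.ant \<noteq> v" "U.ant \<noteq> U.t" "U.ant \<noteq> w" "U.ant \<noteq> a" "U.ant \<noteq> b"
  proof -
    have antC: "U.ant \<in> set cs" unfolding U.ant_def using U.c_in .
    show "U.ant \<noteq> v" by (rule U.ant_ne_v)
    show "U.ant \<noteq> U.t" using antC U.t_notC by metis
    show "U.ant \<noteq> w" using antC w(2) by metis
    show "U.ant \<noteq> a" using antC U.nbr_C[OF w(2) Ea(1)] U.ant_ne_v by metis
    show "U.ant \<noteq> b" using antC U.nbr_C[OF w(2) Ea(2)] U.ant_ne_v by metis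
  qed
  have "f U.ant = 2" unfolding f_def dl_def using ant_ne by simp
  moreover have "U.ant < n" by (rule U.ant_bnd)
  ultimately have y0: "y \<noteq> 0\<^sub>v n" unfolding y_def by (metis index_vec index_zero_vec(1) zero_neq_numeral)
  have My: "M *\<^sub>v y = 0\<^sub>v n"
  proof (rule eq_vecI)
    show "dim_vec (M *\<^sub>v y) = dim_vec (0\<^sub>v n)" using M by simp
  next
    fix x assume "x < dim_vec (0\<^sub>v n)"
    hence x: "x < n" by simp
    let ?g = "\<lambda>j. (real (gdist E x j))^2"
    have "(M *\<^sub>v y) $ x = (\<Sum>j=0..<n. ?g j * f j)"
      using x M unfolding M_def y_def dist_sq_matrix_def
      by (simp add: scalar_prod_def)
    also have "\<dots> = 2 * (-(K+1) * ?g v + ?g U.ant + K * ?g U.t) - K * (K+1) * (?g a - 2 * ?g w + ?g b)"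
      unfolding f_def lin_expand dl_def
      using delta_sum U.v_bnd U.ant_bnd U.t_bnd w(1) abn by simp
    also have "\<dots> = 0"
    proof -
      have z: "-(K+1) * ?g v + ?g U.ant + K * ?g U.t = K * (K+1)" using U.z_identity[OF x] unfolding K_def .
      have wi: "?g a - 2 * ?g w + ?g b = 2" using U.w_identity[OF w(1) w(2) ab x] .
      show ?thesis by (simp only: z wi)
    qed
    finally show "(M *\<^sub>v y) $ x = 0\<^sub>v n $ x" using x by simp
  qed
  show ?thesis using kernel_i0[OF M y y0 My] unfolding M_def .
qed

end
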